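(* Let $G=(V,E)$ be a directed graph with positive edge weights (channel fees), let $n\in V$, let $f_{max}\ge 1$, and let $\mathcal{CH}\subseteq E$ be a set of edges out of $n$ (previously selected channels), each $Ch\in\mathcal{CH}$ having fee $f(Ch)\in[1,f_{max}]$. Let $n_i\in V\setminus\{n\}$ be such that the edge $(n,n_i)$ is not in $\mathcal{CH}$, and for $x\in[1,f_{max}]$ let $G_i^{x}$ denote the graph obtained from $G$ by adding the edge $(n,n_i)$ with weight $x$. Define $$\mathsf{TotalER}(x)= x\cdot \mathrm{ebc}_{G_i^{x}}((n,n_i)) + \sum_{Ch\in\mathcal{CH}} f(Ch)\cdot \mathrm{ebc}_{G_i^{x}}(Ch).$$ Then $$\max_{x\in[1,f_{max}]} \mathsf{TotalER}(x) \;\ge\; \sum_{Ch\in\mathcal{CH}} f(Ch)\cdot \mathrm{ebc}_{G}(Ch),$$ i.e., the objective of the greedy channel selection (adding a channel to $\mathcal{CH}$ with its best fee) is monotone non-decreasing.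
   Context: Shortest paths are minimum-total-weight directed paths. In a weighted directed graph $H$, for vertices $s\neq t$, $\sigma_{st}$ denotes the number of shortest paths from $s$ to $t$, and for an edge $e$, $\sigma_{st[e]}$ denotes the number of those shortest paths containing $e$. The edge betweenness centrality is $\mathrm{ebc}_{H}(e)=\sum_{s\neq t,\ \sigma_{st}\neq 0} \frac{\sigma_{st[e]}}{\sigma_{st}}$. The quantity $f(Ch)\cdot\mathrm{ebc}(Ch)$ is the expected reward of channel $Ch$ in a payment channel network where payments follow cheapest paths. *)

theory Defs
  imports Complex_Main
begin

definition path_edges :: "'a list \<Rightarrow> ('a \<times> 'a) list" where
  "path_edges p = zip p (tl p)"

definition is_path :: "('a \<times> 'a) set \<Rightarrow> 'a \<Rightarrow> 'a \<Rightarrow> 'a list \<Rightarrow> bool" where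
  "is_path E s t p \<longleftrightarrow> p \<noteq> [] \<and> hd p = s \<and> last p = t \<and> distinct p
      \<and> set (path_edges p) \<subseteq> E"

definition path_weight :: "('a \<times> 'a \<Rightarrow> real) \<Rightarrow> 'a list \<Rightarrow> real" where
  "path_weight w p = sum_list (map w (path_edges p))"

definition shortest_paths ::
  "('a \<times> 'a) set \<Rightarrow> ('a \<times> 'a \<Rightarrow> real) \<Rightarrow> 'a \<Rightarrow> 'a \<Rightarrow> 'a list set" where
  "shortest_paths E w s t =
     {p. is_path E s t p \<and> (\<forall>q. is_path E s t q \<longrightarrow> path_weight w p \<le> path_weight w q)}"

definition sigma :: "('a \<times> 'a) set \<Rightarrow> ('a \<times> 'a \<Rightarrow> real) \<Rightarrow> 'a \<Rightarrow> 'a \<Rightarrow> nat" where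
  "sigma E w s t = card (shortest_paths E w s t)"

definition sigma_e ::
  "('a \<times> 'a) set \<Rightarrow> ('a \<times> 'a \<Rightarrow> real) \<Rightarrow> 'a \<Rightarrow> 'a \<Rightarrow> 'a \<times> 'a \<Rightarrow> nat" where
  "sigma_e E w s t e = card {p \<in> shortest_paths E w s t. e \<in> set (path_edges p)}"

definition ebc ::
  "'a set \<Rightarrow> ('a \<times> 'a) set \<Rightarrow> ('a \<times> 'a \<Rightarrow> real) \<Rightarrow> 'a \<times> 'a \<Rightarrow> real" where
  "ebc V E w e =
     (\<Sum>(s, t) \<in> {(s, t). s \<in> V \<and> t \<in> V \<and> s \<noteq> t \<and> sigma E w s t \<noteq> 0}.
        real (sigma_e E w s t e) / real (sigma E w s t))"

definition TotalER ::
  "'a set \<Rightarrow> ('a \<times> 'a) set \<Rightarrow> ('a \<times> 'a \<Rightarrow> real) \<Rightarrow> ('a \<times> 'a) set \<Rightarrow> 'a \<Rightarrow> 'a \<Rightarrow> real \<Rightarrow> real"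
  where
  "TotalER V E w CH n ni x =
     (let E' = insert (n, ni) E; w' = w((n, ni) := x) in
      x * ebc V E' w' (n, ni) + (\<Sum>Ch\<in>CH. w Ch * ebc V E' w' Ch))"

end

theory Submission
  imports Defs
begin

lemma path_set_sub:
  assumes "is_path E s t p" "E \<subseteq> V \<times> V" "s \<in> V"
  shows "set p \<subseteq> V"
proof
  fix v assume v: "v \<in> set p"
  have ne: "p \<noteq> []" and hd: "hd p = s" and ed: "set (path_edges p) \<subseteq> E"
    using assms(1) by (auto simp: is_path_def)
  show "v \<in> V"
  proof (cases "v = hd p")
    case True then show ?thesis using hd assms(3) by simp
  next
    case False
    then have "v \<in> set (tl p)" using v ne by (cases p) auto
    then obtain i where i: "i < length (tl p)" "tl p ! i = v" by (auto simp: in_set_conv_nth)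
    have "(p ! i, tl p ! i) \<in> set (path_edges p)"
      unfolding path_edges_def set_zip using i by auto
    then show ?thesis using ed assms(2) i by auto
  qed
qed

lemma finite_paths:
  assumes "finite V" "E \<subseteq> V \<times> V" "s \<in> V"
  shows "finite {p. is_path E s t p}"
proof (rule finite_subset[OF _ finite_subset_distinct[OF assms(1)]])
  show "{p. is_path E s t p} \<subseteq> {xs. set xs \<subseteq> V \<and> distinct xs}"
    using path_set_sub[OF _ assms(2,3)] by (auto simp: is_path_def)
qed

lemma path_edges_fst_unique:
  assumes "distinct p" "e1 \<in> set (path_edges p)" "e2 \<in> set (path_edges p)" "fst e1 = fst e2"
  shows "e1 = e2"
proof -
  obtain i where i0: "i < length (tl p)" "e1 = (p ! i, tl p ! i)"
    using assms(2) unfolding path_edges_def set_zip by auto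
  obtain j where j0: "j < length (tl p)" "e2 = (p ! j, tl p ! j)"
    using assms(3) unfolding path_edges_def set_zip by auto
  have i: "i < length p" "i < length (tl p)" "e1 = (p ! i, tl p ! i)" using i0 by auto
  have j: "j < length p" "j < length (tl p)" "e2 = (p ! j, tl p ! j)" using j0 by auto
  have "p ! i = p ! j" using i j assms(4) by simp
  then have "i = j" using assms(1) i j nth_eq_iff_index_eq by blast
  then show ?thesis using i j by simp
qed

lemma shortest_nonempty:
  assumes "finite {p. is_path E s t p}" "{p. is_path E s t p} \<noteq> {}"
  shows "shortest_paths E w s t \<noteq> {}"
proof -
  let ?P = "{p. is_path E s t p}"
  have "arg_min_on (path_weight w) ?P \<in> ?P \<and> \<not>(\<exists>x\<in>?P. path_weight w x < path_weight w (arg_min_on (path_weight w) ?P))"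
    using arg_min_if_finite[OF assms, of "path_weight w"] by blast
  then have "arg_min_on (path_weight w) ?P \<in> shortest_paths E w s t"
    unfolding shortest_paths_def by force
  then show ?thesis by blast
qed

lemma shortest_sub: "shortest_paths E w s t \<subseteq> {p. is_path E s t p}"
  by (auto simp: shortest_paths_def)


definition cpath :: "('a \<times> 'a \<Rightarrow> real) \<Rightarrow> ('a \<times> 'a) set \<Rightarrow> 'a list \<Rightarrow> real" where
  "cpath g C p = (\<Sum>Ch\<in>C. g Ch * (if Ch \<in> set (path_edges p) then 1 else 0))"

definition pairs :: "'a set \<Rightarrow> ('a \<times> 'a) set \<Rightarrow> ('a \<times> 'a \<Rightarrow> real) \<Rightarrow> ('a \<times> 'a) set" where
  "pairs V E w = {(s, t). s \<in> V \<and> t \<in> V \<and> s \<noteq> t \<and> sigma E w s t \<noteq> 0}"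

lemma card_filter_sum:
  assumes "finite T"
  shows "real (card {p \<in> T. P p}) = (\<Sum>p\<in>T. if P p then 1 else 0)"
proof -
  have "real (card {p \<in> T. P p}) = (\<Sum>p\<in>{p \<in> T. P p}. 1)" by simp
  also have "\<dots> = (\<Sum>p\<in>T. if P p then 1 else 0)" using assms by (rule sum.inter_filter)
  finally show ?thesis .
qed

lemma weighted_ebc:
  assumes "finite C"
  shows "(\<Sum>Ch\<in>C. g Ch * ebc V E w Ch) =
    (\<Sum>st\<in>pairs V E w. (\<Sum>p\<in>shortest_paths E w (fst st) (snd st). cpath g C p)
        / real (sigma E w (fst st) (snd st)))"
proof -
  have "(\<Sum>Ch\<in>C. g Ch * ebc V E w Ch) =
     (\<Sum>Ch\<in>C. \<Sum>st\<in>pairs V E w. g Ch * (real (sigma_e E w (fst st) (snd st) Ch) / real (sigma E w (fst st) (snd st))))"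
    unfolding ebc_def pairs_def sum_distrib_left by (simp add: case_prod_beta')
  also have "\<dots> = (\<Sum>st\<in>pairs V E w. \<Sum>Ch\<in>C. g Ch * (real (sigma_e E w (fst st) (snd st) Ch) / real (sigma E w (fst st) (snd st))))"
    by (rule sum.swap)
  also have "\<dots> = (\<Sum>st\<in>pairs V E w. (\<Sum>p\<in>shortest_paths E w (fst st) (snd st). cpath g C p)
        / real (sigma E w (fst st) (snd st)))"
  proof (rule sum.cong[OF refl])
    fix st assume st: "st \<in> pairs V E w"
    let ?T = "shortest_paths E w (fst st) (snd st)"
    have fin: "finite ?T" using st unfolding pairs_def sigma_def
      by (auto intro: card_ge_0_finite)
    have "(\<Sum>Ch\<in>C. g Ch * (real (sigma_e E w (fst st) (snd st) Ch) / real (sigma E w (fst st) (snd st))))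
       = (\<Sum>Ch\<in>C. g Ch * real (sigma_e E w (fst st) (snd st) Ch)) / real (sigma E w (fst st) (snd st))"
      by (simp add: sum_divide_distrib)
    also have "(\<Sum>Ch\<in>C. g Ch * real (sigma_e E w (fst st) (snd st) Ch)) = (\<Sum>p\<in>?T. cpath g C p)"
      unfolding sigma_e_def card_filter_sum[OF fin] cpath_def sum_distrib_left
      by (rule sum.swap)
    finally show "(\<Sum>Ch\<in>C. g Ch * (real (sigma_e E w (fst st) (snd st) Ch) / real (sigma E w (fst st) (snd st))))
       = (\<Sum>p\<in>?T. cpath g C p) / real (sigma E w (fst st) (snd st))" .
  qed
  finally show ?thesis .
qed

lemma avg_case1:
  fixes c c' :: "'b \<Rightarrow> real"
  assumes "finite T" "finite N" "T \<noteq> {}" "T \<inter> N = {}"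
    and "\<forall>p\<in>T. c p \<le> M" "\<forall>p\<in>T. c' p = c p" "\<forall>p\<in>N. c' p \<ge> M"
  shows "(\<Sum>p\<in>T. c p) / real (card T) \<le> (\<Sum>p\<in>T \<union> N. c' p) / real (card (T \<union> N))"
proof -
  let ?S = "\<Sum>p\<in>T. c p"
  have S: "?S \<le> real (card T) * M" using sum_mono[of T c "\<lambda>_. M"] assms(5) by simp
  have cu: "card (T \<union> N) = card T + card N" using assms card_Un_disjoint by blast
  have su: "(\<Sum>p\<in>T \<union> N. c' p) = ?S + (\<Sum>p\<in>N. c' p)"
    using sum.union_disjoint[OF assms(1,2,4), of c'] sum.cong[OF refl, of T c' c] assms(6) by simp
  have sn: "(\<Sum>p\<in>N. c' p) \<ge> real (card N) * M" using sum_mono[of N "\<lambda>_. M" c'] assms(7) by simp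
  have ct: "real (card T) > 0" using assms(1,3) by (simp add: card_gt_0_iff)
  have "?S * real (card N) \<le> real (card T) * M * real (card N)"
    using S by (simp add: mult_right_mono)
  then have "?S * (real (card T) + real (card N)) \<le> (?S + real (card N) * M) * real (card T)"
    by (simp add: algebra_simps)
  also have "\<dots> \<le> (?S + (\<Sum>p\<in>N. c' p)) * real (card T)"
    using sn ct by (simp add: mult_right_mono)
  finally have "?S * (real (card T) + real (card N)) \<le> (?S + (\<Sum>p\<in>N. c' p)) * real (card T)" .
  then show ?thesis unfolding su cu using ct
    by (simp add: divide_simps add_pos_nonneg)
qed

lemma avg_case2:
  fixes c c' :: "'b \<Rightarrow> real"
  assumes "finite T" "finite T'" "T \<noteq> {}" "T' \<noteq> {}"
    and "\<forall>p\<in>T. c p \<le> M" "\<forall>p\<in>T'. c' p \<ge> M"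
  shows "(\<Sum>p\<in>T. c p) / real (card T) \<le> (\<Sum>p\<in>T'. c' p) / real (card T')"
proof -
  have S: "(\<Sum>p\<in>T. c p) \<le> real (card T) * M" using sum_mono[of T c "\<lambda>_. M"] assms(5) by simp
  have S': "(\<Sum>p\<in>T'. c' p) \<ge> real (card T') * M" using sum_mono[of T' "\<lambda>_. M" c'] assms(6) by simp
  have ct: "real (card T) > 0" using assms(1,3) by (simp add: card_gt_0_iff)
  have ct': "real (card T') > 0" using assms(2,4) by (simp add: card_gt_0_iff)
  have "(\<Sum>p\<in>T. c p) / real (card T) \<le> M" using S ct by (simp add: divide_simps mult.commute)
  also have "M \<le> (\<Sum>p\<in>T'. c' p) / real (card T')" using S' ct' by (simp add: divide_simps mult.commute)
  finally show ?thesis .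
qed


lemma cpath_le:
  assumes "distinct p" "\<forall>Ch\<in>CH. fst Ch = n" "\<forall>Ch\<in>CH. w Ch \<in> {1..fmax}" "finite CH" "fmax \<ge> 1"
  shows "cpath w CH p \<le> fmax"
proof -
  have eq: "cpath w CH p = (\<Sum>Ch\<in>{Ch\<in>CH. Ch \<in> set (path_edges p)}. w Ch)"
    unfolding cpath_def using sum.inter_filter[OF assms(4), of w "\<lambda>Ch. Ch \<in> set (path_edges p)"]
    by (simp add: if_distrib cong: if_cong)
  show ?thesis
  proof (cases "{Ch\<in>CH. Ch \<in> set (path_edges p)} = {}")
    case True then show ?thesis using eq assms(5) by (simp only: sum.empty)
  next
    case False
    then obtain c0 where c0: "c0 \<in> CH" "c0 \<in> set (path_edges p)" by blast
    have "{Ch\<in>CH. Ch \<in> set (path_edges p)} = {c0}"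
    proof (intro equalityI subsetI)
      fix x assume "x \<in> {Ch\<in>CH. Ch \<in> set (path_edges p)}"
      then show "x \<in> {c0}" using c0 path_edges_fst_unique[OF assms(1), of x c0] assms(2) by auto
    qed (use c0 in auto)
    then show ?thesis using eq c0 assms(3) by simp
  qed
qed

lemma cpath_ge:
  assumes "finite C" "e \<in> C" "e \<in> set (path_edges p)" "\<forall>Ch\<in>C. g Ch \<ge> 0"
  shows "cpath g C p \<ge> g e"
proof -
  have "g e = g e * (if e \<in> set (path_edges p) then 1 else 0)" using assms(3) by simp
  also have "\<dots> \<le> cpath g C p" unfolding cpath_def
    by (rule member_le_sum) (use assms in auto)
  finally show ?thesis .
qed

lemma cpath_nonneg:
  assumes "\<forall>Ch\<in>C. g Ch \<ge> 0"
  shows "cpath g C p \<ge> 0"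
  unfolding cpath_def by (rule sum_nonneg) (use assms in auto)


lemma pw_eq:
  assumes "set (path_edges p) \<subseteq> E" "e \<notin> E"
  shows "path_weight (w(e := x)) p = path_weight w p"
  unfolding path_weight_def using assms by (intro arg_cong[where f=sum_list] map_cong) auto

lemma pair_ineq:
  fixes w :: "'a \<times> 'a \<Rightarrow> real"
  assumes fV: "finite V" and EV: "E \<subseteq> V \<times> V" and sV: "s \<in> V" and nV: "n \<in> V" and niV: "ni \<in> V"
    and nE: "(n, ni) \<notin> E" and nCH: "(n, ni) \<notin> CH" and fst: "\<forall>Ch\<in>CH. fst Ch = n"
    and wr: "\<forall>Ch\<in>CH. w Ch \<in> {1..fmax}" and fm: "fmax \<ge> 1" and fCH: "finite CH"
    and sig: "sigma E w s t \<noteq> 0"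
  defines "E' \<equiv> insert (n, ni) E" and "w' \<equiv> w((n, ni) := fmax)" and "C' \<equiv> insert (n, ni) CH"
  shows "sigma E' w' s t \<noteq> 0 \<and>
    (\<Sum>p\<in>shortest_paths E w s t. cpath w CH p) / real (sigma E w s t)
    \<le> (\<Sum>p\<in>shortest_paths E' w' s t. cpath w' C' p) / real (sigma E' w' s t)"
proof -
  let ?T = "shortest_paths E w s t" and ?T' = "shortest_paths E' w' s t"
  have E'V: "E' \<subseteq> V \<times> V" using EV nV niV by (auto simp: E'_def)
  have finT: "finite ?T" and neT: "?T \<noteq> {}" using sig unfolding sigma_def
    by (auto intro: card_ge_0_finite)
  then obtain p0 where p0: "p0 \<in> ?T" by blast
  have old_new: "is_path E' s t p \<and> path_weight w' p = path_weight w p \<and> (n, ni) \<notin> set (path_edges p)"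
    if "is_path E s t p" for p
    using that nE pw_eq[of p E "(n, ni)" w fmax] by (auto simp: is_path_def E'_def w'_def)
  have new_old: "is_path E s t p" if "is_path E' s t p" "(n, ni) \<notin> set (path_edges p)" for p
    using that by (auto simp: is_path_def E'_def)
  have finP': "finite {p. is_path E' s t p}" by (rule finite_paths[OF fV E'V sV])
  have p0P: "is_path E s t p0" using p0 by (auto simp: shortest_paths_def)
  have neT': "?T' \<noteq> {}"
    by (rule shortest_nonempty[OF finP']) (use old_new[OF p0P] in blast)
  have finT': "finite ?T'" using finite_subset[OF shortest_sub finP'] .
  have sig': "sigma E' w' s t \<noteq> 0" using finT' neT' by (simp add: sigma_def)
  have cT: "\<forall>p\<in>?T. cpath w CH p \<le> fmax"
    using cpath_le[OF _ fst wr fCH fm] by (auto simp: shortest_paths_def is_path_def)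
  have gnn: "\<forall>Ch\<in>C'. w' Ch \<ge> 0" using wr fm nCH by (auto simp: C'_def w'_def)
  have cN: "cpath w' C' p \<ge> fmax" if "(n, ni) \<in> set (path_edges p)" for p
    using cpath_ge[of C' "(n, ni)" p w'] that gnn fCH by (auto simp: C'_def w'_def)
  have cO: "cpath w' C' p = cpath w CH p" if "(n, ni) \<notin> set (path_edges p)" for p
  proof -
    have "cpath w' C' p = w' (n, ni) * 0 + cpath w' CH p"
      unfolding C'_def cpath_def using fCH nCH that by simp
    also have "cpath w' CH p = cpath w CH p"
      unfolding cpath_def w'_def using nCH by (intro sum.cong) auto
    finally show ?thesis by simp
  qed
  have main: "(\<Sum>p\<in>?T. cpath w CH p) / real (card ?T) \<le> (\<Sum>p\<in>?T'. cpath w' C' p) / real (card ?T')"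
  proof (cases "\<exists>q. is_path E' s t q \<and> path_weight w' q < path_weight w p0")
    case True
    then obtain q where q: "is_path E' s t q" "path_weight w' q < path_weight w p0" by blast
    have "\<forall>p\<in>?T'. cpath w' C' p \<ge> fmax"
    proof
      fix p assume p: "p \<in> ?T'"
      have "(n, ni) \<in> set (path_edges p)"
      proof (rule ccontr)
        assume nn: "(n, ni) \<notin> set (path_edges p)"
        have pp: "is_path E' s t p" "path_weight w' p \<le> path_weight w' q"
          using p q(1) by (auto simp: shortest_paths_def)
        have po: "is_path E s t p" using new_old[OF pp(1) nn] .
        have "path_weight w p0 \<le> path_weight w p" using p0 po by (auto simp: shortest_paths_def)
        then show False using pp(2) q(2) old_new[OF po] by simp
      qed
      then show "cpath w' C' p \<ge> fmax" by (rule cN)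
    qed
    then show ?thesis using avg_case2[OF finT finT' neT neT' cT] by blast
  next
    case False
    then have lb: "\<forall>q. is_path E' s t q \<longrightarrow> path_weight w p0 \<le> path_weight w' q" by force
    let ?N = "{p\<in>?T'. (n, ni) \<in> set (path_edges p)}"
    have Teq: "?T = {p\<in>?T'. (n, ni) \<notin> set (path_edges p)}"
    proof (intro equalityI subsetI)
      fix p assume p: "p \<in> ?T"
      have pP: "is_path E s t p" using p by (auto simp: shortest_paths_def)
      have "path_weight w p \<le> path_weight w p0" using p p0P by (auto simp: shortest_paths_def)
      then have "\<forall>q. is_path E' s t q \<longrightarrow> path_weight w' p \<le> path_weight w' q"
        using lb old_new[OF pP] by force
      then show "p \<in> {p\<in>?T'. (n, ni) \<notin> set (path_edges p)}"
        using old_new[OF pP] by (auto simp: shortest_paths_def)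
    next
      fix p assume p: "p \<in> {p\<in>?T'. (n, ni) \<notin> set (path_edges p)}"
      then have pP': "is_path E' s t p" and nn: "(n, ni) \<notin> set (path_edges p)"
        and mn: "\<forall>q. is_path E' s t q \<longrightarrow> path_weight w' p \<le> path_weight w' q"
        by (auto simp: shortest_paths_def)
      have pP: "is_path E s t p" using new_old[OF pP' nn] .
      have "\<forall>q. is_path E s t q \<longrightarrow> path_weight w p \<le> path_weight w q"
      proof (intro allI impI)
        fix q assume qP: "is_path E s t q"
        have "path_weight w p = path_weight w' p" using old_new[OF pP] by simp
        also have "\<dots> \<le> path_weight w' p0" using mn old_new[OF p0P] by blast
        also have "\<dots> = path_weight w p0" using old_new[OF p0P] by simp
        also have "\<dots> \<le> path_weight w q" using p0 qP by (auto simp: shortest_paths_def)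
        finally show "path_weight w p \<le> path_weight w q" .
      qed
      then show "p \<in> ?T" using pP by (auto simp: shortest_paths_def)
    qed
    have T'eq: "?T' = ?T \<union> ?N" using Teq by blast
    have "(\<Sum>p\<in>?T. cpath w CH p) / real (card ?T) \<le> (\<Sum>p\<in>?T \<union> ?N. cpath w' C' p) / real (card (?T \<union> ?N))"
      by (rule avg_case1[OF finT _ neT _ cT])
         (use finT' Teq cO cN in auto)
    then show ?thesis using T'eq by simp
  qed
  show ?thesis using sig' main by (simp add: sigma_def)
qed


theorem theorem4:
  fixes V :: "'a set" and E :: "('a \<times> 'a) set" and w :: "'a \<times> 'a \<Rightarrow> real"
    and n ni :: 'a and fmax :: real and CH :: "('a \<times> 'a) set"
  assumes "finite V"
    and "E \<subseteq> V \<times> V"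
    and "\<forall>e\<in>E. w e > 0"
    and "n \<in> V"
    and "fmax \<ge> 1"
    and "CH \<subseteq> E"
    and "\<forall>Ch\<in>CH. fst Ch = n"
    and "\<forall>Ch\<in>CH. w Ch \<in> {1..fmax}"
    and "ni \<in> V - {n}"
    and "(n, ni) \<notin> CH"
    and "(n, ni) \<notin> E"
  shows "\<exists>x\<in>{1..fmax}. TotalER V E w CH n ni x \<ge> (\<Sum>Ch\<in>CH. w Ch * ebc V E w Ch)"
proof
  show "fmax \<in> {1..fmax}" using assms(5) by simp
  define E' where "E' = insert (n, ni) E"
  define w' where "w' = w((n, ni) := fmax)"
  define C' where "C' = insert (n, ni) CH"
  have fCH: "finite CH" using assms(1,2,6) finite_subset[of CH "V \<times> V"] by blast
  have niV: "ni \<in> V" using assms(9) by simp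
  have tot: "TotalER V E w CH n ni fmax = (\<Sum>Ch\<in>C'. w' Ch * ebc V E' w' Ch)"
  proof -
    have "(\<Sum>Ch\<in>C'. w' Ch * ebc V E' w' Ch) = w' (n, ni) * ebc V E' w' (n, ni) + (\<Sum>Ch\<in>CH. w' Ch * ebc V E' w' Ch)"
      unfolding C'_def using fCH assms(10) by simp
    also have "(\<Sum>Ch\<in>CH. w' Ch * ebc V E' w' Ch) = (\<Sum>Ch\<in>CH. w Ch * ebc V E' w' Ch)"
      unfolding w'_def using assms(10) by (intro sum.cong) auto
    finally have a: "(\<Sum>Ch\<in>C'. w' Ch * ebc V E' w' Ch) = w' (n, ni) * ebc V E' w' (n, ni) + (\<Sum>Ch\<in>CH. w Ch * ebc V E' w' Ch)" .
    have b: "TotalER V E w CH n ni fmax = fmax * ebc V E' w' (n, ni) + (\<Sum>Ch\<in>CH. w Ch * ebc V E' w' Ch)"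
      unfolding TotalER_def Let_def E'_def w'_def by (rule refl)
    have c: "w' (n, ni) = fmax" by (simp add: w'_def)
    show ?thesis using a b c by simp
  qed
  have fP': "finite (pairs V E' w')"
    by (rule finite_subset[of _ "V \<times> V"]) (use assms(1) in \<open>auto simp: pairs_def\<close>)
  let ?f = "\<lambda>st. (\<Sum>p\<in>shortest_paths E w (fst st) (snd st). cpath w CH p) / real (sigma E w (fst st) (snd st))"
  let ?g = "\<lambda>st. (\<Sum>p\<in>shortest_paths E' w' (fst st) (snd st). cpath w' C' p) / real (sigma E' w' (fst st) (snd st))"
  have PI: "\<And>st. st \<in> pairs V E w \<Longrightarrow> st \<in> pairs V E' w' \<and> ?f st \<le> ?g st"
  proof -
    fix st assume st: "st \<in> pairs V E w"
    obtain s t where stq: "st = (s, t)" by (cases st)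
    have h: "s \<in> V" "t \<in> V" "s \<noteq> t" "sigma E w s t \<noteq> 0" using st stq by (auto simp: pairs_def)
    have "sigma E' w' s t \<noteq> 0 \<and> ?f (s, t) \<le> ?g (s, t)"
      using pair_ineq[OF assms(1,2) h(1) assms(4) niV assms(11,10,7,8,5) fCH h(4)]
      unfolding E'_def w'_def C'_def by simp
    then show "st \<in> pairs V E' w' \<and> ?f st \<le> ?g st" using h stq by (auto simp: pairs_def)
  qed
  have gnn: "\<forall>Ch\<in>C'. w' Ch \<ge> 0" using assms(8,5,10) by (auto simp: C'_def w'_def)
  have "(\<Sum>Ch\<in>CH. w Ch * ebc V E w Ch) = sum ?f (pairs V E w)"
    by (rule weighted_ebc[OF fCH])
  also have "\<dots> \<le> sum ?g (pairs V E w)" using PI by (intro sum_mono) auto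
  also have "\<dots> \<le> sum ?g (pairs V E' w')"
  proof (rule sum_mono2[OF fP'])
    show "pairs V E w \<subseteq> pairs V E' w'" using PI by blast
    show "0 \<le> ?g b" if "b \<in> pairs V E' w' - pairs V E w" for b
      using cpath_nonneg[OF gnn] by (auto intro!: divide_nonneg_nonneg sum_nonneg)
  qed
  also have "\<dots> = (\<Sum>Ch\<in>C'. w' Ch * ebc V E' w' Ch)"
    by (rule weighted_ebc[symmetric]) (use fCH in \<open>simp add: C'_def\<close>)
  finally show "(\<Sum>Ch\<in>CH. w Ch * ebc V E w Ch) \<le> TotalER V E w CH n ni fmax" using tot by simp
qed

end
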